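(* Let $G$ be a finite simple graph on the vertex set $\{1,\dots,n\}$ containing a cycle of length $3$. Then, as subsets of $\mathrm{span}_{\mathbb{Q}}\{x_1,\dots,x_n,y_1,\dots,y_n\}$, the resonance variety $\mathcal{R}^1(E_2(G),d_2)$ is strictly contained in $\mathcal{R}^1(E_3(G),0)$.
   Context: Let $E$ be a complex elliptic curve, $x,y$ a basis of $H^1(E;\mathbb{Q})$ with $xy$ generating $H^2$. Let $E_2(n)$ be the quotient of the free graded-commutative algebra (for total degree) over $\mathbb{Q}$ on $x_i,y_i$ ($1\le i\le n$) of bidegree $(1,0)$ and $\omega_{ij}=\omega_{ji}$ ($i\ne j$) of bidegree $(0,1)$ by the relations $(x_i-x_j)\omega_{ij}=0$, $(y_i-y_j)\omega_{ij}=0$, $\omega_{ij}\omega_{jk}+\omega_{jk}\omega_{ki}+\omega_{ki}\omega_{ij}=0$ (distinct $i,j,k$), with the derivation $d_2$ of bidegree $(2,-1)$, $d_2x_i=d_2y_i=0$, $d_2\omega_{ij}=(x_i-x_j)(y_i-y_j)$. For a graph $G$ with edge set $\mathcal{E}$, $E_2(G)$ is the sub-differential bigraded algebra generated by all $x_i,y_i$ and the $\omega_{ij}$ with $\{i,j\}\in\mathcal{E}$ (the $E_2$ page of the rational Leray spectral sequence of $M(G)=\{P\in E^n\mid P_i\ne P_j,\ \{i,j\}\in\mathcal{E}\}\hookrightarrow E^n$), and $E_3(G)$ is its $d_2$-cohomology. Both are regarded as CDGAs with the total degree $p+q$, $E_2(G)$ with differential $d_2$ and $E_3(G)$ with zero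 differential; in both cases $H^1$ is identified with $E_2^{1,0}(G)=\mathrm{span}_{\mathbb{Q}}\{x_i,y_i\}$. For a CDGA $(A,d)$ with $A^0=\mathbb{Q}$ and $z\in H^1(A,d)$ (a degree-one cocycle), set $d_z(e)=ze+d(e)$; the first resonance variety is $\mathcal{R}^1(A)=\{z\in H^1(A,d)\mid H^1(A,d_z)\ne0\}$. *)

theory Defs
  imports Complex_Main
begin

text \<open>Generators of E_2(n): x_i, y_i (bidegree (1,0)) and omega_ij (bidegree (0,1)).
  omega_ij = omega_ji is encoded by normalising to W (min i j) (max i j).
  All generators have total degree 1 (odd), so the free graded-commutative algebra
  is the exterior algebra on them; its degree 2 part is modelled as antisymmetric
  coefficient functions on pairs of generators.\<close>

datatype gen = X nat | Y nat | W nat nat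

definition om :: "nat \<Rightarrow> nat \<Rightarrow> gen" where
  "om i j = W (min i j) (max i j)"

definition bas :: "gen \<Rightarrow> gen \<Rightarrow> rat" where
  "bas g = (\<lambda>h. if h = g then 1 else 0)"

definition xg :: "nat \<Rightarrow> gen \<Rightarrow> rat" where "xg i = bas (X i)"
definition yg :: "nat \<Rightarrow> gen \<Rightarrow> rat" where "yg i = bas (Y i)"
definition wg :: "nat \<Rightarrow> nat \<Rightarrow> gen \<Rightarrow> rat" where "wg i j = bas (om i j)"

definition vdiff :: "('a \<Rightarrow> rat) \<Rightarrow> ('a \<Rightarrow> rat) \<Rightarrow> 'a \<Rightarrow> rat" where
  "vdiff u v = (\<lambda>t. u t - v t)"

definition vadd :: "('a \<Rightarrow> rat) \<Rightarrow> ('a \<Rightarrow> rat) \<Rightarrow> 'a \<Rightarrow> rat" where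
  "vadd u v = (\<lambda>t. u t + v t)"

definition vscale :: "rat \<Rightarrow> ('a \<Rightarrow> rat) \<Rightarrow> 'a \<Rightarrow> rat" where
  "vscale c u = (\<lambda>t. c * u t)"

definition lspan :: "('a \<Rightarrow> rat) set \<Rightarrow> ('a \<Rightarrow> rat) set" where
  "lspan S = {v. \<exists>F c. finite F \<and> F \<subseteq> S \<and> v = (\<lambda>t. \<Sum>f\<in>F. c f * f t)}"

definition wedge :: "(gen \<Rightarrow> rat) \<Rightarrow> (gen \<Rightarrow> rat) \<Rightarrow> gen \<times> gen \<Rightarrow> rat" where
  "wedge u v = (\<lambda>(g, h). u g * v h - u h * v g)"

definition simple_graph :: "nat \<Rightarrow> nat set set \<Rightarrow> bool" where
  "simple_graph n E \<longleftrightarrow> (\<forall>e\<in>E. \<exists>i j. i \<noteq> j \<and> i \<in> {1..n} \<and> j \<in> {1..n} \<and> e = {i, j})"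

definition has_triangle :: "nat set set \<Rightarrow> bool" where
  "has_triangle E \<longleftrightarrow> (\<exists>i j k. i \<noteq> j \<and> j \<noteq> k \<and> i \<noteq> k \<and>
      {i, j} \<in> E \<and> {j, k} \<in> E \<and> {k, i} \<in> E)"

definition Vxy :: "nat \<Rightarrow> (gen \<Rightarrow> rat) set" where
  "Vxy n = lspan ((xg ` {1..n}) \<union> (yg ` {1..n}))"

definition A1 :: "nat \<Rightarrow> nat set set \<Rightarrow> (gen \<Rightarrow> rat) set" where
  "A1 n E = lspan ((xg ` {1..n}) \<union> (yg ` {1..n}) \<union>
                   {wg i j | i j. i \<in> {1..n} \<and> j \<in> {1..n} \<and> {i, j} \<in> E})"

text \<open>Degree two relations of E_2(n) (the ideal in degree two is their span).\<close>
definition rels :: "nat \<Rightarrow> (gen \<times> gen \<Rightarrow> rat) set" where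
  "rels n =
     {wedge (vdiff (xg i) (xg j)) (wg i j) | i j. i \<in> {1..n} \<and> j \<in> {1..n} \<and> i \<noteq> j}
   \<union> {wedge (vdiff (yg i) (yg j)) (wg i j) | i j. i \<in> {1..n} \<and> j \<in> {1..n} \<and> i \<noteq> j}
   \<union> {vadd (vadd (wedge (wg i j) (wg j k)) (wedge (wg j k) (wg k i))) (wedge (wg k i) (wg i j))
       | i j k. i \<in> {1..n} \<and> j \<in> {1..n} \<and> k \<in> {1..n} \<and> i \<noteq> j \<and> j \<noteq> k \<and> i \<noteq> k}"

definition d2 :: "nat \<Rightarrow> (gen \<Rightarrow> rat) \<Rightarrow> gen \<times> gen \<Rightarrow> rat" where
  "d2 n a = (\<lambda>t. \<Sum>i\<in>{1..n}. \<Sum>j\<in>{i<..n}.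
       a (W i j) * wedge (vdiff (xg i) (xg j)) (vdiff (yg i) (yg j)) t)"

text \<open>First resonance variety of a connected CDGA (A^0 = Q, d(1) = 0), expressed through
  its degree \<le> 2 data: H1 = the set of degree-one cocycle classes considered
  (here identified with span{x_i,y_i}), A1 = degree-one part, mult = product
  A^1 x A^1 -> A^2, d = differential A^1 -> A^2, iszero = vanishing in A^2.
  H^1(A, d_z) = ker(d_z : A^1 -> A^2) / d_z(A^0), and d_z(A^0) = Q z.\<close>
definition res1 ::
  "('a \<Rightarrow> rat) set \<Rightarrow> ('a \<Rightarrow> rat) set \<Rightarrow> (('a \<Rightarrow> rat) \<Rightarrow> ('a \<Rightarrow> rat) \<Rightarrow> 'b \<Rightarrow> rat)
    \<Rightarrow> (('a \<Rightarrow> rat) \<Rightarrow> 'b \<Rightarrow> rat) \<Rightarrow> (('b \<Rightarrow> rat) \<Rightarrow> bool) \<Rightarrow> ('a \<Rightarrow> rat) set" where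
  "res1 Hs As mu dd isz =
     {z \<in> Hs. \<exists>a\<in>As. isz (vadd (mu z a) (dd a)) \<and> (\<forall>c::rat. a \<noteq> vscale c z)}"

text \<open>R^1(E_2(G), d_2): degree two of E_2(G) sits in E_2(n)^2 = Lambda^2 / span(rels n).\<close>
definition R1_E2 :: "nat \<Rightarrow> nat set set \<Rightarrow> (gen \<Rightarrow> rat) set" where
  "R1_E2 n E = res1 (Vxy n) (A1 n E) wedge (d2 n) (\<lambda>w. w \<in> lspan (rels n))"

text \<open>E_3(G): degree one = d_2-cocycles of E_2(G)^1 (nothing to quotient by);
  degree two = cocycles of E_2(G)^2 modulo d_2(E_2(G)^1); zero differential.\<close>
definition Z1 :: "nat \<Rightarrow> nat set set \<Rightarrow> (gen \<Rightarrow> rat) set" where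
  "Z1 n E = {a \<in> A1 n E. d2 n a \<in> lspan (rels n)}"

definition R1_E3 :: "nat \<Rightarrow> nat set set \<Rightarrow> (gen \<Rightarrow> rat) set" where
  "R1_E3 n E = res1 (Vxy n) (Z1 n E) wedge (\<lambda>_ _. 0)
      (\<lambda>w. \<exists>b\<in>A1 n E. vdiff w (d2 n b) \<in> lspan (rels n))"

end

theory Submission
  imports Defs
begin

lemma lspan_mem: "s \<in> S \<Longrightarrow> s \<in> lspan S"
  unfolding lspan_def by (rule CollectI, rule exI[of _ "{s}"], rule exI[of _ "\<lambda>_. 1"]) auto

lemma lspan_zero: "(\<lambda>_. 0) \<in> lspan S"
  unfolding lspan_def by (rule CollectI, rule exI[of _ "{}"]) auto

lemma lspan_add: assumes "u \<in> lspan S" "v \<in> lspan S" shows "vadd u v \<in> lspan S"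
proof -
  obtain F c where F: "finite F" "F \<subseteq> S" "u = (\<lambda>t. \<Sum>f\<in>F. c f * f t)" using assms(1) unfolding lspan_def by blast
  obtain G d where G: "finite G" "G \<subseteq> S" "v = (\<lambda>t. \<Sum>f\<in>G. d f * f t)" using assms(2) unfolding lspan_def by blast
  define e where "e f = (if f \<in> F then c f else 0) + (if f \<in> G then d f else 0)" for f
  have "vadd u v = (\<lambda>t. \<Sum>f\<in>F\<union>G. e f * f t)"
  proof
    fix t
    have "(\<Sum>f\<in>F\<union>G. e f * f t) = (\<Sum>f\<in>F\<union>G. (if f \<in> F then c f * f t else 0)) + (\<Sum>f\<in>F\<union>G. (if f \<in> G then d f * f t else 0))"
      unfolding sum.distrib[symmetric] by (rule sum.cong) (auto simp: e_def distrib_right)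
    also have "\<dots> = (\<Sum>f\<in>F. c f * f t) + (\<Sum>f\<in>G. d f * f t)"
      using F(1) G(1) by (simp add: sum.If_cases Int_absorb1 Int_absorb2)
    finally show "vadd u v t = (\<Sum>f\<in>F\<union>G. e f * f t)" using F(3) G(3) by (simp add: vadd_def)
  qed
  then show ?thesis unfolding lspan_def using F G by blast
qed

lemma lspan_scale: assumes "u \<in> lspan S" shows "vscale a u \<in> lspan S"
proof -
  obtain F c where F: "finite F" "F \<subseteq> S" "u = (\<lambda>t. \<Sum>f\<in>F. c f * f t)" using assms(1) unfolding lspan_def by blast
  have "vscale a u = (\<lambda>t. \<Sum>f\<in>F. (a * c f) * f t)"
    unfolding F(3) vscale_def by (simp add: sum_distrib_left mult.assoc)
  then show ?thesis unfolding lspan_def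
    by (intro CollectI exI[of _ F] exI[of _ "\<lambda>f. a * c f"]) (simp add: F(1,2))
qed

lemma lspan_vanish: assumes "u \<in> lspan S" "\<forall>s\<in>S. s t = 0" shows "u t = 0"
proof -
  obtain F c where F: "finite F" "F \<subseteq> S" "u = (\<lambda>t. \<Sum>f\<in>F. c f * f t)" using assms(1) unfolding lspan_def by blast
  show ?thesis using F assms(2) by (auto intro!: sum.neutral)
qed

lemma lspan_mask: assumes "u \<in> lspan S"
  and "\<forall>s\<in>S. (\<forall>t. \<not> P t \<longrightarrow> s t = 0) \<or> (\<forall>t. P t \<longrightarrow> s t = 0)"
  shows "(\<lambda>t. if P t then u t else 0) \<in> lspan S"
proof -
  obtain F c where F: "finite F" "F \<subseteq> S" "u = (\<lambda>t. \<Sum>f\<in>F. c f * f t)" using assms(1) unfolding lspan_def by blast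
  define F' where "F' = {s\<in>F. \<forall>t. \<not> P t \<longrightarrow> s t = 0}"
  have "(\<lambda>t. if P t then u t else 0) = (\<lambda>t. \<Sum>f\<in>F'. c f * f t)"
  proof
    fix t show "(if P t then u t else 0) = (\<Sum>f\<in>F'. c f * f t)"
    proof (cases "P t")
      case True
      have "(\<Sum>f\<in>F. c f * f t) = (\<Sum>f\<in>F'. c f * f t)"
        apply (rule sum.mono_neutral_right)
        using F assms(2) True unfolding F'_def by auto
      then show ?thesis using True F(3) by simp
    next
      case False
      then show ?thesis unfolding F'_def by (auto intro!: sum.neutral[symmetric])
    qed
  qed
  moreover have "finite F'" "F' \<subseteq> S" using F unfolding F'_def by auto
  ultimately show ?thesis unfolding lspan_def by blast
qed


definition isW :: "gen \<Rightarrow> bool" where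
  "isW g = (case g of W _ _ \<Rightarrow> True | _ \<Rightarrow> False)"

lemma isW_simps[simp]: "isW (W i j)" "\<not> isW (X i)" "\<not> isW (Y i)"
  by (simp_all add: isW_def)

lemma om_isW[simp]: "isW (om i j)" by (simp add: om_def)

lemma bas_nonW: "isW g \<Longrightarrow> \<not> isW h \<Longrightarrow> bas g h = 0"
  by (auto simp: bas_def)

lemma xg_W[simp]: "xg i (W k l) = 0" and yg_W[simp]: "yg i (W k l) = 0"
  and wg_X[simp]: "wg i j (X m) = 0" and wg_Y[simp]: "wg i j (Y m) = 0"
  and xg_Y[simp]: "xg i (Y m) = 0" and yg_X[simp]: "yg i (X m) = 0"
  by (simp_all add: xg_def yg_def wg_def bas_def om_def)

lemma wg_nonW: "\<not> isW g \<Longrightarrow> wg i j g = 0"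
  by (cases g) simp_all

lemma xg_isW: "isW g \<Longrightarrow> xg i g = 0" and yg_isW: "isW g \<Longrightarrow> yg i g = 0"
  by (cases g; simp)+

lemma rels_vanish_nonW:
  assumes "r \<in> rels n" "\<not> isW g" "\<not> isW h" shows "r (g, h) = 0"
  using assms unfolding rels_def
  by (auto simp: wedge_def vadd_def vdiff_def wg_nonW)

lemma rels_mask:
  assumes "r \<in> rels n"
  shows "(\<forall>t. \<not> (isW (fst t) \<noteq> isW (snd t)) \<longrightarrow> r t = 0) \<or> (\<forall>t. (isW (fst t) \<noteq> isW (snd t)) \<longrightarrow> r t = 0)"
  using assms unfolding rels_def
  apply (elim UnE CollectE exE conjE)
  subgoal apply (rule disjI1) by (auto simp: wedge_def vdiff_def wg_nonW xg_isW)
  subgoal apply (rule disjI1) by (auto simp: wedge_def vdiff_def wg_nonW yg_isW)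
  subgoal apply (rule disjI2) by (auto simp: wedge_def vadd_def wg_nonW)
  done

lemma Vxy_W: "z \<in> Vxy n \<Longrightarrow> isW g \<Longrightarrow> z g = 0"
  unfolding Vxy_def by (erule lspan_vanish) (auto simp: xg_isW yg_isW)

lemma A1_maskW: "a \<in> A1 n E \<Longrightarrow> (\<lambda>g. if isW g then a g else 0) \<in> A1 n E"
  unfolding A1_def by (erule lspan_mask) (auto simp: xg_isW yg_isW wg_nonW)

lemma A1_maskNW: "a \<in> A1 n E \<Longrightarrow> (\<lambda>g. if \<not> isW g then a g else 0) \<in> A1 n E"
  unfolding A1_def by (erule lspan_mask) (auto simp: xg_isW yg_isW wg_nonW)

lemma d2_dep: "(\<And>i j. a (W i j) = b (W i j)) \<Longrightarrow> d2 n a = d2 n b"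
  unfolding d2_def by simp

lemma d2_zero: "(\<And>i j. a (W i j) = 0) \<Longrightarrow> d2 n a = (\<lambda>_. 0)"
  unfolding d2_def by simp

lemma d2_nonW: "isW g \<or> isW h \<Longrightarrow> d2 n a (g, h) = 0"
  unfolding d2_def by (auto simp: wedge_def vdiff_def xg_isW yg_isW)

lemma d2_add: "d2 n (vadd u v) = vadd (d2 n u) (d2 n v)"
  unfolding d2_def vadd_def by (simp add: distrib_right sum.distrib)

lemma d2_scale: "d2 n (vscale c u) = vscale c (d2 n u)"
  unfolding d2_def vscale_def by (simp add: sum_distrib_left mult.assoc)


lemma D_sym: "wedge (vdiff (xg j) (xg i)) (vdiff (yg j) (yg i)) = wedge (vdiff (xg i) (xg j)) (vdiff (yg i) (yg j))"
  unfolding wedge_def vdiff_def by (auto simp: algebra_simps)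

lemma d2_wg_lt:
  assumes "p < q" "q \<le> n" "1 \<le> p"
  shows "d2 n (wg p q) = wedge (vdiff (xg p) (xg q)) (vdiff (yg p) (yg q))"
proof
  fix t
  have wv: "wg p q (W i' j') * x = (if i' = p then (if j' = q then x else 0) else 0)" for i' j' x
    using assms by (auto simp: wg_def bas_def om_def)
  have "d2 n (wg p q) t = (\<Sum>i'\<in>{1..n}. if i' = p then (\<Sum>j'\<in>{i'<..n}. (if j' = q then wedge (vdiff (xg i') (xg j')) (vdiff (yg i') (yg j')) t else 0)) else 0)"
    unfolding d2_def wv by (intro sum.cong refl) simp
  also have "\<dots> = (\<Sum>j'\<in>{p<..n}. (if j' = q then wedge (vdiff (xg p) (xg j')) (vdiff (yg p) (yg j')) t else 0))"
    using assms by (simp add: sum.delta')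
  also have "\<dots> = wedge (vdiff (xg p) (xg q)) (vdiff (yg p) (yg q)) t"
    using assms by (simp add: sum.delta')
  finally show "d2 n (wg p q) t = wedge (vdiff (xg p) (xg q)) (vdiff (yg p) (yg q)) t" .
qed

lemma wg_sym: "wg i j = wg j i" unfolding wg_def om_def by (simp add: min.commute max.commute)

lemma d2_wg:
  assumes "i \<noteq> j" "i \<in> {1..n}" "j \<in> {1..n}"
  shows "d2 n (wg i j) = wedge (vdiff (xg i) (xg j)) (vdiff (yg i) (yg j))"
proof (cases "i < j")
  case True then show ?thesis using assms d2_wg_lt by auto
next
  case False then have "j < i" using assms by auto
  then show ?thesis using assms d2_wg_lt[of j i n] by (simp add: wg_sym D_sym)
qed


lemma A1_scale: "a \<in> A1 n E \<Longrightarrow> vscale c a \<in> A1 n E"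
  unfolding A1_def by (rule lspan_scale)

lemma A1_zero: "(\<lambda>_. 0) \<in> A1 n E"
  unfolding A1_def by (rule lspan_zero)

lemma subset_R: "R1_E2 n E \<subseteq> R1_E3 n E"
proof
  fix z assume "z \<in> R1_E2 n E"
  then obtain a where z: "z \<in> Vxy n" and a: "a \<in> A1 n E"
    and w: "vadd (wedge z a) (d2 n a) \<in> lspan (rels n)" and nm: "\<forall>c. a \<noteq> vscale c z"
    unfolding R1_E2_def res1_def by blast
  define a10 where "a10 = (\<lambda>g. if \<not> isW g then a g else 0)"
  define a01 where "a01 = (\<lambda>g. if isW g then a g else 0)"
  have a10A: "a10 \<in> A1 n E" unfolding a10_def using a by (rule A1_maskNW)
  have a01A: "a01 \<in> A1 n E" unfolding a01_def using a by (rule A1_maskW)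
  have zW: "isW g \<Longrightarrow> z g = 0" for g using z by (rule Vxy_W)
  have d2a10: "d2 n a10 = (\<lambda>_. 0)" by (rule d2_zero) (simp add: a10_def)
  have d2a01: "d2 n a01 = d2 n a" by (rule d2_dep) (simp add: a01_def)
  have key: "wedge z a10 = vscale (-1) (d2 n a01)"
  proof (rule ext, clarify)
    fix g h
    show "wedge z a10 (g,h) = vscale (-1) (d2 n a01) (g,h)"
    proof (cases "isW g \<or> isW h")
      case True
      then show ?thesis by (auto simp: wedge_def a10_def zW d2_nonW vscale_def)
    next
      case False
      have "vadd (wedge z a) (d2 n a) (g,h) = 0"
        using w by (rule lspan_vanish) (use False rels_vanish_nonW in blast)
      then show ?thesis using False by (simp add: vadd_def wedge_def a10_def vscale_def d2a01)
    qed
  qed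
  show "z \<in> R1_E3 n E"
  proof (cases "\<exists>c. a10 = vscale c z")
    case False
    have "a10 \<in> Z1 n E" unfolding Z1_def using a10A d2a10 lspan_zero by auto
    moreover have "vdiff (vadd (wedge z a10) ((\<lambda>_ _. 0) a10)) (d2 n (vscale (-1) a01)) \<in> lspan (rels n)"
    proof -
      have "vdiff (vadd (wedge z a10) ((\<lambda>_ _. 0) a10)) (d2 n (vscale (-1) a01)) = (\<lambda>_. 0)"
        unfolding d2_scale key[symmetric] by (simp add: vdiff_def vadd_def)
      then show ?thesis using lspan_zero by simp
    qed
    ultimately show ?thesis using z False A1_scale[OF a01A]
      unfolding R1_E3_def res1_def by blast
  next
    case True
    then obtain c where c: "a10 = vscale c z" by blast
    have "wedge z a10 = (\<lambda>_. 0)" unfolding c by (auto simp: wedge_def vscale_def)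
    then have d0: "d2 n a01 = (\<lambda>_. 0)" using key
      by (metis (no_types, lifting) ext mult_minus1 neg_equal_0_iff_equal vscale_def)
    have a01Z: "a01 \<in> Z1 n E" unfolding Z1_def using a01A d0 lspan_zero by auto
    have nm2: "\<forall>c'. a01 \<noteq> vscale c' z"
    proof (intro allI notI)
      fix c' assume h: "a01 = vscale c' z"
      have "a = vscale c z"
      proof
        fix g show "a g = vscale c z g"
        proof (cases "isW g")
          case True
          have "a01 g = 0" using h True zW by (simp add: vscale_def)
          then show ?thesis using True zW by (simp add: a01_def vscale_def)
        next
          case False
          then show ?thesis using fun_cong[OF c, of g] by (simp add: a10_def)
        qed
      qed
      then show False using nm by blast
    qed
    define P where "P t = (isW (fst t) \<noteq> isW (snd t))" for t :: "gen \<times> gen"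
    have Pw: "(\<lambda>t. if P t then vadd (wedge z a) (d2 n a) t else 0) \<in> lspan (rels n)"
      unfolding P_def using w by (rule lspan_mask) (use rels_mask in blast)
    have eq: "(\<lambda>t. if P t then vadd (wedge z a) (d2 n a) t else 0) = vdiff (vadd (wedge z a01) ((\<lambda>_ _. 0) a01)) (d2 n (\<lambda>_. 0))"
    proof (rule ext, clarify)
      fix g h
      show "(if P (g,h) then vadd (wedge z a) (d2 n a) (g,h) else 0) = vdiff (vadd (wedge z a01) ((\<lambda>_ _. 0) a01)) (d2 n (\<lambda>_. 0)) (g,h)"
        by (cases "isW g"; cases "isW h") (auto simp: P_def vadd_def vdiff_def wedge_def a01_def zW d2_nonW d2_zero)
    qed
    show ?thesis using z a01Z nm2 Pw A1_zero unfolding eq R1_E3_def res1_def by blast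
  qed
qed


lemma xg_X[simp]: "xg i (X m) = (if m = i then 1 else 0)" and yg_Y[simp]: "yg i (Y m) = (if m = i then 1 else 0)"
  and xg_Y'[simp]: "xg i (Y m) = 0" and yg_X'[simp]: "yg i (X m) = 0"
  by (auto simp: xg_def yg_def bas_def)

lemma in_R3:
  assumes ij: "i \<noteq> j" and jk: "j \<noteq> k" and ik: "i \<noteq> k"
    and I: "i \<in> {1..n}" "j \<in> {1..n}" "k \<in> {1..n}"
    and e: "{i,j} \<in> E" "{j,k} \<in> E" "{k,i} \<in> E"
  shows "vadd (vadd (xg i) (vscale (-2) (xg j))) (xg k) \<in> R1_E3 n E"
proof -
  define z where "z = vadd (vadd (xg i) (vscale (-2) (xg j))) (xg k)"
  define a where "a = vadd (vadd (yg i) (vscale (-2) (yg j))) (yg k)"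
  define b where "b = vadd (vadd (vscale 2 (wg i j)) (vscale 2 (wg j k))) (vscale (-1) (wg k i))"
  have xV: "xg m \<in> Vxy n" if "m \<in> {1..n}" for m unfolding Vxy_def using that by (intro lspan_mem) auto
  have zV: "z \<in> Vxy n" unfolding z_def Vxy_def
    using xV[OF I(1)] xV[OF I(2)] xV[OF I(3)] unfolding Vxy_def by (intro lspan_add lspan_scale)
  have yA: "yg m \<in> A1 n E" if "m \<in> {1..n}" for m unfolding A1_def using that by (intro lspan_mem) auto
  have wA: "wg p q \<in> A1 n E" if "p \<in> {1..n}" "q \<in> {1..n}" "{p,q} \<in> E" for p q
    unfolding A1_def using that by (intro lspan_mem) blast
  have aA: "a \<in> A1 n E" unfolding a_def
    using yA[OF I(1)] yA[OF I(2)] yA[OF I(3)] unfolding A1_def by (intro lspan_add lspan_scale)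
  have bA: "b \<in> A1 n E" unfolding b_def
    using wA[OF I(1,2) e(1)] wA[OF I(2,3) e(2)] wA[OF I(3,1) e(3)] unfolding A1_def by (intro lspan_add lspan_scale)
  have d2a: "d2 n a = (\<lambda>_. 0)" by (rule d2_zero) (simp add: a_def vadd_def vscale_def)
  have aZ: "a \<in> Z1 n E" unfolding Z1_def using aA d2a lspan_zero by auto
  have d2b: "d2 n b = vadd (vadd (vscale 2 (wedge (vdiff (xg i) (xg j)) (vdiff (yg i) (yg j))))
      (vscale 2 (wedge (vdiff (xg j) (xg k)) (vdiff (yg j) (yg k)))))
      (vscale (-1) (wedge (vdiff (xg k) (xg i)) (vdiff (yg k) (yg i))))"
    unfolding b_def d2_add d2_scale using d2_wg ij jk ik I by auto
  have "vdiff (vadd (wedge z a) ((\<lambda>_ _. 0) a)) (d2 n b) = (\<lambda>_. 0)"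
  proof (rule ext, clarify)
    fix g h
    show "vdiff (vadd (wedge z a) ((\<lambda>_ _. 0) a)) (d2 n b) (g, h) = 0"
      unfolding d2b z_def a_def by (simp add: vdiff_def vadd_def vscale_def wedge_def algebra_simps)
  qed
  then have "vdiff (vadd (wedge z a) ((\<lambda>_ _. 0) a)) (d2 n b) \<in> lspan (rels n)" using lspan_zero by simp
  moreover have "\<forall>c. a \<noteq> vscale c z"
  proof (intro allI notI)
    fix c assume "a = vscale c z"
    then have "a (Y i) = vscale c z (Y i)" by simp
    then show False using ij ik by (simp add: a_def z_def vadd_def vscale_def)
  qed
  ultimately show ?thesis using zV aZ bA unfolding z_def[symmetric] R1_E3_def res1_def by blast
qed


lemma notin_R2:
  assumes ij: "i \<noteq> j" and jk: "j \<noteq> k" and ik: "i \<noteq> k"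
  shows "vadd (vadd (xg i) (vscale (-2) (xg j))) (xg k) \<notin> R1_E2 n E"
proof
  define z where "z = vadd (vadd (xg i) (vscale (-2) (xg j))) (xg k)"
  assume "vadd (vadd (xg i) (vscale (-2) (xg j))) (xg k) \<in> R1_E2 n E"
  then obtain a where a: "a \<in> A1 n E"
    and w: "vadd (wedge z a) (d2 n a) \<in> lspan (rels n)" and nm: "\<forall>c. a \<noteq> vscale c z"
    unfolding R1_E2_def res1_def z_def[symmetric] by blast
  have zX: "z (X m) = (if m = i then 1 else 0) - 2 * (if m = j then 1 else 0) + (if m = k then 1 else 0)" for m
    by (simp add: z_def vadd_def vscale_def)
  have zY: "z (Y m) = 0" for m by (simp add: z_def vadd_def vscale_def)
  have zW: "z (W p q) = 0" for p q by (simp add: z_def vadd_def vscale_def)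
  have s1: "vadd (wedge z a) (d2 n a) (X m, W p q) = 0" if "m \<noteq> p" "m \<noteq> q" for m p q
  proof (rule lspan_vanish[OF w], rule ballI)
    fix r assume "r \<in> rels n"
    then show "r (X m, W p q) = 0" using that unfolding rels_def
      by (auto simp: wedge_def vadd_def vdiff_def wg_def bas_def om_def min_def max_def split: if_splits)
  qed
  have aW: "a (W p q) = 0" for p q
  proof -
    obtain m where m: "m \<in> {i,j,k}" "m \<noteq> p" "m \<noteq> q" using ij jk ik by blast
    have "z (X m) \<noteq> 0" using m ij jk ik zX by auto
    moreover have "z (X m) * a (W p q) = 0"
      using s1[OF m(2,3)] by (simp add: vadd_def wedge_def zW d2_nonW)
    ultimately show ?thesis by simp
  qed
  have d0: "d2 n a = (\<lambda>_. 0)" by (rule d2_zero) (rule aW)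
  have s2: "wedge z a (g, h) = 0" if "\<not> isW g" "\<not> isW h" for g h
  proof -
    have "vadd (wedge z a) (d2 n a) (g, h) = 0"
      using w by (rule lspan_vanish) (use that rels_vanish_nonW in blast)
    then show ?thesis by (simp add: vadd_def d0)
  qed
  have zi: "z (X i) = 1" using zX ij ik by simp
  have "a = vscale (a (X i)) z"
  proof
    fix g show "a g = vscale (a (X i)) z g"
    proof (cases g)
      case (X q)
      have "wedge z a (X i, X q) = 0" by (rule s2) simp_all
      then show ?thesis using X zi by (simp add: wedge_def vscale_def mult.commute)
    next
      case (Y q)
      have "wedge z a (X i, Y q) = 0" by (rule s2) simp_all
      then show ?thesis using Y zi zY by (simp add: wedge_def vscale_def)
    next
      case (W p q)
      then show ?thesis using aW zW by (simp add: vscale_def)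
    qed
  qed
  then show False using nm by blast
qed


theorem lemma4p7:
  fixes n :: nat and E :: "nat set set"
  assumes "simple_graph n E" and "has_triangle E"
  shows "R1_E2 n E \<subset> R1_E3 n E"
proof -
  obtain i j k where d: "i \<noteq> j" "j \<noteq> k" "i \<noteq> k"
    and e: "{i, j} \<in> E" "{j, k} \<in> E" "{k, i} \<in> E"
    using assms(2) unfolding has_triangle_def by blast
  have V: "v \<in> {1..n}" if vf: "v \<in> f" and fE: "f \<in> E" for v f
  proof -
    obtain p q where "p \<in> {1..n}" "q \<in> {1..n}" "f = {p, q}"
      using assms(1) fE unfolding simple_graph_def by blast
    then show ?thesis using vf by blast
  qed
  have I: "i \<in> {1..n}" "j \<in> {1..n}" "k \<in> {1..n}" using V e by blast+
  show ?thesis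
    using subset_R[of n E] in_R3[OF d I e] notin_R2[OF d, of n E] by blast
qed

end
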